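(* Let $\lambda>0$, let $E_1,E_2,\ldots$ be i.i.d. exponential random variables with rate $\lambda$ (i.e. $\text{Exp}(\lambda)$, mean $1/\lambda$), and let $$X=\prod_{i=1}^{\infty}\min\left\{\sum_{k=1}^iE_k,1\right\}.$$ Then $$X\overset{d}{=}\prod_{i=1}^N U_i,$$ where $N\sim\text{Pois}(\lambda)$, $(U_i)_{i\in\mathbb{N}}$ is an i.i.d. sequence of $\text{U}(0,1)$ random variables independent of $N$, and the product is understood to equal $1$ if $N=0$.
   Context: $\overset{d}{=}$ denotes equality in distribution. $\text{Pois}(\lambda)$ is the Poisson distribution with mean $\lambda$, and $\text{U}(0,1)$ is the uniform distribution on $(0,1)$. *)

theory Defs
  imports "HOL-Probability.Probability"
begin

(* The infinite product  prod_{i>=1} min(sum_{k=1}^i E_k, 1), read as the limit of the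
   partial products (indices shifted to start at 0). *)
definition prod_min_partial_sums :: "(nat \<Rightarrow> real) \<Rightarrow> real" where
  "prod_min_partial_sums e = lim (\<lambda>n. \<Prod>i<n. min (\<Sum>k\<le>i. e k) 1)"

end

theory Submission
  imports Defs
begin


definition unif :: "real measure" where "unif = uniform_measure lborel {0<..<1}"

lemma prob_space_unif: "prob_space unif"
  unfolding unif_def by (rule prob_space_uniform_measure) auto

lemma sets_unif[measurable_cong, simp]: "sets unif = sets borel"
  unfolding unif_def by simp

lemma space_unif[simp]: "space unif = UNIV"
  unfolding unif_def by simp

lemma nn_integral_unif:
  assumes [measurable]: "f \<in> borel_measurable borel"
  shows "(\<integral>\<^sup>+x. f x \<partial>unif) = (\<integral>\<^sup>+x. f x * indicator {0..1} x \<partial>lborel)"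
proof -
  have "(\<integral>\<^sup>+x. f x \<partial>unif) = (\<integral>\<^sup>+x. f x * indicator {0<..<1} x \<partial>lborel)"
    unfolding unif_def by (subst nn_integral_uniform_measure) (auto simp: divide_ennreal_def)
  also have "\<dots> = (\<integral>\<^sup>+x. f x * indicator {0..1} x \<partial>lborel)"
  proof (rule nn_integral_cong_AE)
    have "AE x in lborel. x \<notin> {0, 1}"
      by (rule AE_discrete_difference) auto
    then show "AE x in lborel. f x * indicator {0<..<1} x = f x * indicator {0..1} x"
      by eventually_elim (auto split: split_indicator)
  qed
  finally show ?thesis .
qed

primrec nu :: "nat \<Rightarrow> real measure" where
  "nu 0 = return borel 1"
| "nu (Suc n) = distr (unif \<Otimes>\<^sub>M nu n) borel (\<lambda>(w,p). w*p)"

lemma sets_nu[measurable_cong, simp]: "sets (nu n) = sets borel"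
  by (cases n) auto

lemma space_nu[simp]: "space (nu n) = UNIV"
  using sets_eq_imp_space_eq[OF sets_nu[of n]] by simp

lemma prob_space_nu: "prob_space (nu n)"
proof (induction n)
  case 0 then show ?case by (simp add: prob_space_return)
next
  case (Suc n)
  interpret A: prob_space unif by (rule prob_space_unif)
  interpret B: prob_space "nu n" by (rule Suc)
  interpret P: pair_prob_space unif "nu n" ..
  show ?case by (simp add: P.prob_space_distr)
qed

lemma measurable_nu_integral[measurable (raw)]:
  assumes "case_prod f \<in> borel_measurable (N \<Otimes>\<^sub>M borel)"
  shows "(\<lambda>x. \<integral>\<^sup>+y. f x y \<partial>nu n) \<in> borel_measurable N"
proof -
  interpret B: prob_space "nu n" by (rule prob_space_nu)
  have "sets (N \<Otimes>\<^sub>M nu n) = sets (N \<Otimes>\<^sub>M borel)"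
    by (rule sets_pair_measure_cong) auto
  then have "case_prod f \<in> borel_measurable (N \<Otimes>\<^sub>M nu n)"
    using assms by (simp cong: measurable_cong_sets)
  then show ?thesis by (rule B.borel_measurable_nn_integral)
qed

lemma nn_integral_nu_Suc:
  assumes [measurable]: "g \<in> borel_measurable borel"
  shows "(\<integral>\<^sup>+p. g p \<partial>nu (Suc n)) = (\<integral>\<^sup>+w. indicator {0..1} w * (\<integral>\<^sup>+p. g (w*p) \<partial>nu n) \<partial>lborel)"
proof -
  interpret B: prob_space "nu n" by (rule prob_space_nu)
  have "(\<integral>\<^sup>+p. g p \<partial>nu (Suc n)) = (\<integral>\<^sup>+x. g (fst x * snd x) \<partial>(unif \<Otimes>\<^sub>M nu n))"
    by (simp add: nn_integral_distr case_prod_beta)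
  also have "\<dots> = (\<integral>\<^sup>+w. (\<integral>\<^sup>+p. g (w*p) \<partial>nu n) \<partial>unif)"
    by (subst B.nn_integral_fst[symmetric]) auto
  also have "\<dots> = (\<integral>\<^sup>+w. indicator {0..1} w * (\<integral>\<^sup>+p. g (w*p) \<partial>nu n) \<partial>lborel)"
    by (subst nn_integral_unif) (auto simp: mult.commute)
  finally show ?thesis .
qed

lemma nn_integral_nu_0: "g \<in> borel_measurable borel \<Longrightarrow> (\<integral>\<^sup>+p. g p \<partial>nu 0) = g 1"
  by (simp only: nu.simps) (rule nn_integral_return, auto)

lemma prod_unif:
  assumes "finite J" "g \<in> borel_measurable borel"
  shows "(\<integral>\<^sup>+u. g (\<Prod>j\<in>J. u j) \<partial>PiM J (\<lambda>_. unif)) = (\<integral>\<^sup>+p. g p \<partial>nu (card J))"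
  using assms
proof (induction J arbitrary: g rule: finite_induct)
  case empty
  then show ?case by (simp add: nn_integral_return PiM_empty nn_integral_count_space_finite)
next
  case (insert j J)
  note [measurable] = insert.prems
  interpret U: product_prob_space "\<lambda>_. unif"
    by (simp add: product_prob_space_def product_prob_space_axioms_def prob_space_unif product_sigma_finite_def prob_space_imp_sigma_finite)
  have "(\<integral>\<^sup>+u. g (\<Prod>j\<in>insert j J. u j) \<partial>PiM (insert j J) (\<lambda>_. unif))
     = (\<integral>\<^sup>+y. (\<integral>\<^sup>+x. g (\<Prod>i\<in>insert j J. (x(j:=y)) i) \<partial>PiM J (\<lambda>_. unif)) \<partial>unif)"
    by (rule U.product_nn_integral_insert_rev) (use insert in auto)
  also have "\<dots> = (\<integral>\<^sup>+y. (\<integral>\<^sup>+x. g (y * (\<Prod>i\<in>J. x i)) \<partial>PiM J (\<lambda>_. unif)) \<partial>unif)"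
  proof (intro nn_integral_cong)
    fix y :: real and x :: "_ \<Rightarrow> real"
    have "(\<Prod>i\<in>insert j J. (x(j:=y)) i) = y * (\<Prod>i\<in>J. (x(j:=y)) i)"
      using insert by simp
    also have "(\<Prod>i\<in>J. (x(j:=y)) i) = (\<Prod>i\<in>J. x i)"
      using insert by (intro prod.cong) auto
    finally show "g (\<Prod>i\<in>insert j J. (x(j:=y)) i) = g (y * (\<Prod>i\<in>J. x i))" by simp
  qed
  also have "\<dots> = (\<integral>\<^sup>+y. (\<integral>\<^sup>+p. g (y * p) \<partial>nu (card J)) \<partial>unif)"
    by (intro nn_integral_cong insert.IH) auto
  also have "\<dots> = (\<integral>\<^sup>+w. indicator {0..1} w * (\<integral>\<^sup>+p. g (w*p) \<partial>nu (card J)) \<partial>lborel)"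
    by (subst nn_integral_unif) (auto simp: mult.commute)
  also have "\<dots> = (\<integral>\<^sup>+p. g p \<partial>nu (Suc (card J)))"
    by (rule nn_integral_nu_Suc[symmetric]) fact
  finally show ?case using insert by simp
qed



lemma subst_pow:
  assumes r: "0 < r" and [measurable]: "F \<in> borel_measurable borel"
  shows "(\<integral>\<^sup>+t. indicator {0..r} t * ennreal (real (Suc n) * t^n / r^Suc n) * F ((t/r)^Suc n) \<partial>lborel)
       = (\<integral>\<^sup>+w. indicator {0..1} w * F w \<partial>lborel)"
proof -
  have d: "((\<lambda>t. (t/r)^Suc n) has_real_derivative real (Suc n) * x^n / r^Suc n) (at x)" for x
  proof -
    have "((\<lambda>t. t^Suc n / r^Suc n) has_real_derivative real (Suc n) * x^(Suc n - Suc 0) / r^Suc n) (at x)"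
      by (intro DERIV_cdivide DERIV_pow)
    moreover have "(\<lambda>t. (t/r)^Suc n) = (\<lambda>t. t^Suc n / r^Suc n)"
      by (simp add: power_divide)
    moreover have "Suc n - Suc 0 = n" by simp
    ultimately show ?thesis by (simp only:)
  qed
  have c: "continuous_on {0..r} (\<lambda>x. real (Suc n) * x ^ n / r ^ Suc n)"
    by (intro continuous_intros) (use r in auto)
  have "(\<integral>\<^sup>+w. F w * indicator {(0/r)^Suc n..(r/r)^Suc n} w \<partial>lborel)
     = (\<integral>\<^sup>+t. F ((t/r)^Suc n) * ennreal (real (Suc n) * t^n / r^Suc n) * indicator {0..r} t \<partial>lborel)"
    apply (rule nn_integral_substitution_aux[OF _ _ d c])
    apply (simp_all add: r less_imp_le)
    done
  moreover have "(0/r)^Suc n = 0" "(r/r)^Suc n = 1" using r by auto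
  ultimately have "(\<integral>\<^sup>+w. F w * indicator {0..1} w \<partial>lborel)
     = (\<integral>\<^sup>+t. F ((t/r)^Suc n) * ennreal (real (Suc n) * t^n / r^Suc n) * indicator {0..r} t \<partial>lborel)"
    by (simp only:)
  then show ?thesis by (simp only: mult_ac)
qed

definition Sx :: "(nat \<Rightarrow> real) \<Rightarrow> nat \<Rightarrow> real" where "Sx x i = (\<Sum>k\<le>i. x k)"
definition Px :: "(nat \<Rightarrow> real) \<Rightarrow> nat \<Rightarrow> real" where "Px x n = (\<Prod>i<n. Sx x i)"

definition ex :: "real \<Rightarrow> real measure" where "ex l = density lborel (exponential_density l)"

lemma sets_ex[measurable_cong, simp]: "sets (ex l) = sets borel"
  by (simp add: ex_def)

lemma space_ex[simp]: "space (ex l) = UNIV"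
  by (simp add: ex_def)

lemma nn_integral_ex:
  assumes [measurable]: "f \<in> borel_measurable borel"
  shows "(\<integral>\<^sup>+y. f y \<partial>ex l) = (\<integral>\<^sup>+y. ennreal (exponential_density l y) * f y \<partial>lborel)"
  unfolding ex_def by (subst nn_integral_density) auto

lemma Sx_upd: "i < m \<Longrightarrow> Sx (x(m:=y)) i = Sx x i"
  unfolding Sx_def by (intro sum.cong) auto

lemma Sx_Suc: "Sx x (Suc n) = Sx x n + x (Suc n)"
  unfolding Sx_def by simp

lemma Px_upd: "i \<le> m \<Longrightarrow> Px (x(m:=y)) i = Px x i"
  unfolding Px_def by (intro prod.cong) (auto simp: Sx_upd)

lemma Px_Suc: "Px x (Suc n) = Px x n * Sx x n"
  unfolding Px_def by simp

lemma measurable_Sx[measurable]: "(\<lambda>x. Sx x i) \<in> borel_measurable (PiM I (\<lambda>_. M))"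
  if "{..i} \<subseteq> I" "sets M = sets borel"
  unfolding Sx_def
proof (rule borel_measurable_sum)
  fix k assume "k \<in> {..i}"
  then have "k \<in> I" using that by auto
  then have "(\<lambda>x. x k) \<in> measurable (PiM I (\<lambda>_. M)) M"
    by (rule measurable_component_singleton)
  then show "(\<lambda>x. x k) \<in> borel_measurable (PiM I (\<lambda>_. M))"
    using that(2) by (simp cong: measurable_cong_sets)
qed



lemma prob_space_ex: "0 < l \<Longrightarrow> prob_space (ex l)"
  by (simp add: ex_def prob_space_exponential_density)

lemma product_prob_space_ex: "0 < l \<Longrightarrow> product_prob_space (\<lambda>_. ex l)"
  by (simp add: product_prob_space_def product_prob_space_axioms_def prob_space_ex
      product_sigma_finite_def prob_space_imp_sigma_finite)

lemma measurable_Px[measurable]: "(\<lambda>x. Px x m) \<in> borel_measurable (PiM I (\<lambda>_. M))"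
  if "{..<m} \<subseteq> I" "sets M = sets borel"
  unfolding Px_def
proof (rule borel_measurable_prod)
  fix i assume "i \<in> {..<m}"
  then have "{..i} \<subseteq> I" using that by auto
  then show "(\<lambda>x. Sx x i) \<in> borel_measurable (PiM I (\<lambda>_. M))"
    using that(2) by (rule measurable_Sx)
qed

definition cn :: "real \<Rightarrow> nat \<Rightarrow> real \<Rightarrow> real" where
  "cn l n t = l^Suc n * exp (-l*t) * t^n / fact n"

lemma pair_sf_nu: "pair_sigma_finite lborel (nu n)"
  by (simp add: pair_sigma_finite_def lborel.sigma_finite_measure_axioms prob_space_imp_sigma_finite prob_space_nu)

lemma pair_sf_lborel: "pair_sigma_finite lborel lborel"
  by (simp add: pair_sigma_finite_def lborel.sigma_finite_measure_axioms)

lemma aux_alg: "a \<noteq> 0 \<Longrightarrow> b \<noteq> 0 \<Longrightarrow> f \<noteq> 0 \<Longrightarrow> (X::real) * a / (b*f) * (b*T/a) = X*T/f"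
  by (simp add: field_simps)

lemma L2:
  fixes l :: real and \<phi> :: "real \<Rightarrow> real \<Rightarrow> ennreal"
  assumes l: "0 < l" and \<phi>: "case_prod \<phi> \<in> borel_measurable (borel \<Otimes>\<^sub>M borel)"
  shows "(\<integral>\<^sup>+x. \<phi> (Sx x n) (Px x (Suc n)) \<partial>PiM {..n} (\<lambda>_. ex l))
       = (\<integral>\<^sup>+t. indicator {0..} t * ennreal (cn l n t) * (\<integral>\<^sup>+p. \<phi> t (t^Suc n * p) \<partial>nu n) \<partial>lborel)"
  using \<phi>
proof (induction n arbitrary: \<phi>)
  case 0
  interpret E: product_prob_space "\<lambda>_. ex l" by (rule product_prob_space_ex[OF l])
  note [measurable] = 0
  have "(\<integral>\<^sup>+x. \<phi> (Sx x 0) (Px x (Suc 0)) \<partial>PiM {..0} (\<lambda>_. ex l)) = (\<integral>\<^sup>+x. \<phi> (x 0) (x 0) \<partial>PiM {0::nat} (\<lambda>_. ex l))"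
    by (simp add: Sx_def Px_def)
  also have "\<dots> = (\<integral>\<^sup>+y. \<phi> y y \<partial>ex l)"
    by (rule E.product_nn_integral_singleton[where f="\<lambda>y. \<phi> y y"]) measurable
  also have "\<dots> = (\<integral>\<^sup>+y. ennreal (exponential_density l y) * \<phi> y y \<partial>lborel)"
    by (rule nn_integral_ex) measurable
  also have "\<dots> = (\<integral>\<^sup>+t. indicator {0..} t * ennreal (cn l 0 t) * (\<integral>\<^sup>+p. \<phi> t (t^Suc 0 * p) \<partial>nu 0) \<partial>lborel)"
  proof (intro nn_integral_cong)
    fix t :: real
    have [measurable]: "(\<lambda>p. \<phi> t (t^Suc 0 * p)) \<in> borel_measurable borel" by measurable
    have "(\<integral>\<^sup>+p. \<phi> t (t^Suc 0 * p) \<partial>nu 0) = \<phi> t t"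
      by (subst nn_integral_nu_0) auto
    then show "ennreal (exponential_density l t) * \<phi> t t = indicator {0..} t * ennreal (cn l 0 t) * (\<integral>\<^sup>+p. \<phi> t (t^Suc 0 * p) \<partial>nu 0)"
      by (auto simp: cn_def exponential_density_def mult_ac split: split_indicator)
  qed
  finally show ?case .
next
  case (Suc n)
  interpret E: product_prob_space "\<lambda>_. ex l" by (rule product_prob_space_ex[OF l])
  note [measurable] = Suc.prems
  define \<psi> where "\<psi> s q = (\<integral>\<^sup>+y. ennreal (exponential_density l y) * \<phi> (s+y) (q*(s+y)) \<partial>lborel)" for s q
  have [measurable]: "case_prod \<psi> \<in> borel_measurable (borel \<Otimes>\<^sub>M borel)"
    unfolding \<psi>_def by measurable
  define K where "K r t = (if 0 \<le> t \<and> t \<le> r then l^Suc (Suc n) * exp (-l*r) * t^n / fact n else 0)" for r t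
  have [measurable]: "case_prod K \<in> borel_measurable (borel \<Otimes>\<^sub>M borel)"
    unfolding K_def by measurable
  have ins: "{..Suc n} = insert (Suc n) {..n}" by auto
  have mS1[measurable]: "(\<lambda>x. Sx x (Suc n)) \<in> borel_measurable (PiM (insert (Suc n) {..n}) (\<lambda>_. ex l))"
    by (rule measurable_Sx) auto
  have mP1[measurable]: "(\<lambda>x. Px x (Suc (Suc n))) \<in> borel_measurable (PiM (insert (Suc n) {..n}) (\<lambda>_. ex l))"
    by (rule measurable_Px) auto
  have mS0[measurable]: "(\<lambda>x. Sx x n) \<in> borel_measurable (PiM {..n} (\<lambda>_. ex l))"
    by (rule measurable_Sx) auto
  have mP0[measurable]: "(\<lambda>x. Px x (Suc n)) \<in> borel_measurable (PiM {..n} (\<lambda>_. ex l))"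
    by (rule measurable_Px) auto
  have S1: "(\<integral>\<^sup>+x. \<phi> (Sx x (Suc n)) (Px x (Suc (Suc n))) \<partial>PiM {..Suc n} (\<lambda>_. ex l))
      = (\<integral>\<^sup>+x. \<psi> (Sx x n) (Px x (Suc n)) \<partial>PiM {..n} (\<lambda>_. ex l))"
  proof -
    have "(\<integral>\<^sup>+x. \<phi> (Sx x (Suc n)) (Px x (Suc (Suc n))) \<partial>PiM {..Suc n} (\<lambda>_. ex l))
      = (\<integral>\<^sup>+x. (\<integral>\<^sup>+y. \<phi> (Sx (x(Suc n:=y)) (Suc n)) (Px (x(Suc n:=y)) (Suc (Suc n))) \<partial>ex l) \<partial>PiM {..n} (\<lambda>_. ex l))"
      unfolding ins by (rule E.product_nn_integral_insert) auto
    also have "\<dots> = (\<integral>\<^sup>+x. \<psi> (Sx x n) (Px x (Suc n)) \<partial>PiM {..n} (\<lambda>_. ex l))"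
    proof (intro nn_integral_cong)
      fix x :: "nat \<Rightarrow> real"
      have e1: "Sx (x(Suc n:=y)) (Suc n) = Sx x n + y" for y
        by (simp add: Sx_Suc Sx_upd)
      have e2: "Px (x(Suc n:=y)) (Suc (Suc n)) = Px x (Suc n) * (Sx x n + y)" for y
        by (simp add: Px_Suc[of _ "Suc n"] Px_upd e1)
      show "(\<integral>\<^sup>+y. \<phi> (Sx (x(Suc n:=y)) (Suc n)) (Px (x(Suc n:=y)) (Suc (Suc n))) \<partial>ex l) = \<psi> (Sx x n) (Px x (Suc n))"
        unfolding e1 e2 \<psi>_def by (rule nn_integral_ex) measurable
    qed
    finally show ?thesis .
  qed
  also have S2: "\<dots> = (\<integral>\<^sup>+t. indicator {0..} t * ennreal (cn l n t) * (\<integral>\<^sup>+p. \<psi> t (t^Suc n * p) \<partial>nu n) \<partial>lborel)"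
    by (rule Suc.IH) measurable
  also have "\<dots> = (\<integral>\<^sup>+t. (\<integral>\<^sup>+p. (\<integral>\<^sup>+r. ennreal (K r t) * \<phi> r (t^Suc n * p * r) \<partial>lborel) \<partial>nu n) \<partial>lborel)"
  proof (intro nn_integral_cong)
    fix t :: real
    have S3: "\<psi> t q = (\<integral>\<^sup>+r. ennreal (exponential_density l (r - t)) * \<phi> r (q*r) \<partial>lborel)" for q
    proof -
      have "(\<integral>\<^sup>+r. ennreal (exponential_density l (r - t)) * \<phi> r (q*r) \<partial>lborel)
          = ennreal \<bar>1::real\<bar> * (\<integral>\<^sup>+y. ennreal (exponential_density l ((t + 1*y) - t)) * \<phi> (t + 1*y) (q*(t + 1*y)) \<partial>lborel)"
        by (rule nn_integral_real_affine) auto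
      then show ?thesis by (simp add: \<psi>_def)
    qed
    have Kt: "indicator {0..} t * ennreal (cn l n t) * ennreal (exponential_density l (r - t)) = ennreal (K r t)" for r
    proof (cases "0 \<le> t \<and> t \<le> r")
      case True
      have e3: "exp (- (r - t) * l) = exp (-l*r) * exp (l*t)"
        by (simp add: exp_add[symmetric] algebra_simps)
      have e4: "exp (-l*t) * exp (l*t) = 1"
        by (simp add: exp_minus_inverse[of "l*t", symmetric] mult.commute)
      have "cn l n t * (l * exp (- (r - t) * l)) = l^Suc (Suc n) * exp (-l*r) * t^n / fact n * (exp (-l*t) * exp (l*t))"
        unfolding cn_def e3 by (simp add: field_simps)
      then have "cn l n t * (l * exp (- (r - t) * l)) = l^Suc (Suc n) * exp (-l*r) * t^n / fact n"
        by (simp only: e4 mult_1_right)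
      with True l show ?thesis
        by (simp add: K_def exponential_density_def ennreal_mult'[symmetric] cn_def)
    next
      case False
      then show ?thesis
        by (auto simp: K_def exponential_density_def split: split_indicator)
    qed
    have [measurable]: "(\<lambda>(p, r). ennreal (exponential_density l (r - t)) * \<phi> r (t ^ Suc n * p * r)) \<in> borel_measurable (borel \<Otimes>\<^sub>M borel)"
      by measurable
    have "indicator {0..} t * ennreal (cn l n t) * (\<integral>\<^sup>+p. \<psi> t (t^Suc n * p) \<partial>nu n)
        = indicator {0..} t * ennreal (cn l n t) * (\<integral>\<^sup>+p. (\<integral>\<^sup>+r. ennreal (exponential_density l (r - t)) * \<phi> r (t^Suc n * p * r) \<partial>lborel) \<partial>nu n)"
      by (simp add: S3 mult.assoc)
    also have "\<dots> = (\<integral>\<^sup>+p. indicator {0..} t * ennreal (cn l n t) * (\<integral>\<^sup>+r. ennreal (exponential_density l (r - t)) * \<phi> r (t^Suc n * p * r) \<partial>lborel) \<partial>nu n)"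
      by (rule nn_integral_cmult[symmetric]) measurable
    also have "\<dots> = (\<integral>\<^sup>+p. (\<integral>\<^sup>+r. indicator {0..} t * ennreal (cn l n t) * (ennreal (exponential_density l (r - t)) * \<phi> r (t^Suc n * p * r)) \<partial>lborel) \<partial>nu n)"
      by (intro nn_integral_cong nn_integral_cmult[symmetric]) measurable
    also have "\<dots> = (\<integral>\<^sup>+p. (\<integral>\<^sup>+r. ennreal (K r t) * \<phi> r (t^Suc n * p * r) \<partial>lborel) \<partial>nu n)"
      by (intro nn_integral_cong) (simp add: Kt[symmetric] mult.assoc)
    finally show "indicator {0..} t * ennreal (cn l n t) * (\<integral>\<^sup>+p. \<psi> t (t^Suc n * p) \<partial>nu n)
        = (\<integral>\<^sup>+p. (\<integral>\<^sup>+r. ennreal (K r t) * \<phi> r (t^Suc n * p * r) \<partial>lborel) \<partial>nu n)" .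
  qed
  also have "\<dots> = (\<integral>\<^sup>+t. (\<integral>\<^sup>+r. (\<integral>\<^sup>+p. ennreal (K r t) * \<phi> r (t^Suc n * p * r) \<partial>nu n) \<partial>lborel) \<partial>lborel)"
  proof (intro nn_integral_cong)
    fix t :: real
    interpret P: pair_sigma_finite lborel "nu n" by (rule pair_sf_nu)
    show "(\<integral>\<^sup>+p. (\<integral>\<^sup>+r. ennreal (K r t) * \<phi> r (t^Suc n * p * r) \<partial>lborel) \<partial>nu n)
        = (\<integral>\<^sup>+r. (\<integral>\<^sup>+p. ennreal (K r t) * \<phi> r (t^Suc n * p * r) \<partial>nu n) \<partial>lborel)"
      by (rule P.Fubini') (simp add: K_def, measurable)
  qed
  also have "\<dots> = (\<integral>\<^sup>+r. (\<integral>\<^sup>+t. (\<integral>\<^sup>+p. ennreal (K r t) * \<phi> r (t^Suc n * p * r) \<partial>nu n) \<partial>lborel) \<partial>lborel)"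
    by (rule pair_sigma_finite.Fubini'[OF pair_sf_lborel, symmetric]) (simp add: K_def, measurable)
  also have "\<dots> = (\<integral>\<^sup>+r. indicator {0..} r * ennreal (cn l (Suc n) r) * (\<integral>\<^sup>+q. \<phi> r (r^Suc (Suc n) * q) \<partial>nu (Suc n)) \<partial>lborel)"
  proof (rule nn_integral_cong_AE)
    have "AE r in lborel. r \<noteq> 0" by (rule AE_lborel_singleton)
    then show "AE r in lborel. (\<integral>\<^sup>+t. (\<integral>\<^sup>+p. ennreal (K r t) * \<phi> r (t^Suc n * p * r) \<partial>nu n) \<partial>lborel)
       = indicator {0..} r * ennreal (cn l (Suc n) r) * (\<integral>\<^sup>+q. \<phi> r (r^Suc (Suc n) * q) \<partial>nu (Suc n))"
    proof eventually_elim
      fix r :: real assume "r \<noteq> 0"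
      show "(\<integral>\<^sup>+t. (\<integral>\<^sup>+p. ennreal (K r t) * \<phi> r (t^Suc n * p * r) \<partial>nu n) \<partial>lborel)
       = indicator {0..} r * ennreal (cn l (Suc n) r) * (\<integral>\<^sup>+q. \<phi> r (r^Suc (Suc n) * q) \<partial>nu (Suc n))"
      proof (cases "r < 0")
        case True
        then have "K r t = 0" for t by (auto simp: K_def)
        with True show ?thesis by simp
      next
        case False
        with \<open>r \<noteq> 0\<close> have r: "0 < r" by auto
        define F where "F w = (\<integral>\<^sup>+p. \<phi> r (r^Suc (Suc n) * (w*p)) \<partial>nu n)" for w
        have mF[measurable]: "F \<in> borel_measurable borel" unfolding F_def by measurable
        have FF: "F ((t/r)^Suc n) = (\<integral>\<^sup>+p. \<phi> r (t^Suc n * p * r) \<partial>nu n)" for t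
        proof -
          have "r^Suc (Suc n) * ((t/r)^Suc n * p) = t^Suc n * p * r" for p
            using r by (simp add: power_divide field_simps)
          then show ?thesis unfolding F_def by simp
        qed
        have KK: "ennreal (cn l (Suc n) r) * (indicator {0..r} t * ennreal (real (Suc n) * t^n / r^Suc n)) = ennreal (K r t)" for t
        proof (cases "0 \<le> t \<and> t \<le> r")
          case True
          have "cn l (Suc n) r * (real (Suc n) * t^n / r^Suc n) = l^Suc (Suc n) * exp (-l*r) * t^n / fact n"
            using r unfolding cn_def fact_Suc by (intro aux_alg) auto
          moreover have "0 \<le> cn l (Suc n) r" "0 \<le> real (Suc n) * t^n / r^Suc n"
            using r l True unfolding cn_def by auto
          ultimately show ?thesis using True
            by (simp add: K_def ennreal_mult'' [symmetric] indicator_def)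
        next
          case False
          then show ?thesis by (auto simp: K_def indicator_def)
        qed
        have "indicator {0..} r * ennreal (cn l (Suc n) r) * (\<integral>\<^sup>+q. \<phi> r (r^Suc (Suc n) * q) \<partial>nu (Suc n))
            = ennreal (cn l (Suc n) r) * (\<integral>\<^sup>+w. indicator {0..1} w * F w \<partial>lborel)"
          using r by (subst nn_integral_nu_Suc) (measurable, simp add: F_def)
        also have "\<dots> = ennreal (cn l (Suc n) r) * (\<integral>\<^sup>+t. indicator {0..r} t * ennreal (real (Suc n) * t^n / r^Suc n) * F ((t/r)^Suc n) \<partial>lborel)"
          by (simp only: subst_pow[OF r mF, of n])
        also have "\<dots> = (\<integral>\<^sup>+t. ennreal (cn l (Suc n) r) * (indicator {0..r} t * ennreal (real (Suc n) * t^n / r^Suc n) * F ((t/r)^Suc n)) \<partial>lborel)"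
          by (rule nn_integral_cmult[symmetric]) measurable
        also have "\<dots> = (\<integral>\<^sup>+t. ennreal (K r t) * (\<integral>\<^sup>+p. \<phi> r (t^Suc n * p * r) \<partial>nu n) \<partial>lborel)"
          by (intro nn_integral_cong) (simp only: FF KK[symmetric] mult.assoc)
        also have "\<dots> = (\<integral>\<^sup>+t. (\<integral>\<^sup>+p. ennreal (K r t) * \<phi> r (t^Suc n * p * r) \<partial>nu n) \<partial>lborel)"
          by (intro nn_integral_cong nn_integral_cmult[symmetric]) measurable
        finally show ?thesis ..
      qed
    qed
  qed
  finally show ?case .
qed



lemma ex_tail:
  assumes l: "0 < l" and a: "0 \<le> a"
  shows "(\<integral>\<^sup>+y. indicator {a..} y \<partial>ex l) = ennreal (exp (-l*a))"
proof -
  have "(\<integral>\<^sup>+y. indicator {a..} y \<partial>ex l) = (\<integral>\<^sup>+y. ennreal (exponential_density l y) * indicator {a..} y \<partial>lborel)"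
    by (rule nn_integral_ex) measurable
  also have "\<dots> = ennreal \<bar>1::real\<bar> * (\<integral>\<^sup>+z. ennreal (exponential_density l (a + 1*z)) * indicator {a..} (a + 1*z) \<partial>lborel)"
    by (rule nn_integral_real_affine) auto
  also have "\<dots> = (\<integral>\<^sup>+z. ennreal (exp (-l*a)) * ennreal (exponential_density l z) \<partial>lborel)"
  proof -
    have "ennreal (exponential_density l (a + z)) * indicator {a..} (a + z) = ennreal (exp (-l*a)) * ennreal (exponential_density l z)" for z
    proof (cases "0 \<le> z")
      case True
      have "exp (- (a + z) * l) = exp (-l*a) * exp (- z * l)"
        by (simp add: exp_add[symmetric] algebra_simps)
      with True a l show ?thesis
        by (simp add: exponential_density_def ennreal_mult'[symmetric] mult_ac)
    next
      case False
      then show ?thesis by (simp add: exponential_density_def indicator_def)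
    qed
    then show ?thesis by simp
  qed
  also have "\<dots> = ennreal (exp (-l*a)) * (\<integral>\<^sup>+z. ennreal (exponential_density l z) \<partial>lborel)"
    by (rule nn_integral_cmult) measurable
  also have "(\<integral>\<^sup>+z. ennreal (exponential_density l z) \<partial>lborel) = 1"
  proof -
    interpret P: prob_space "ex l" by (rule prob_space_ex[OF l])
    have "emeasure (ex l) UNIV = 1" using P.emeasure_space_1 by simp
    then show ?thesis unfolding ex_def by (simp add: emeasure_density)
  qed
  finally show ?thesis by simp
qed

lemma aux_alg2: "b \<noteq> 0 \<Longrightarrow> f \<noteq> 0 \<Longrightarrow> (A::real) * T / f * E = E * A / (b * f) * (b * T)"
  by (simp add: field_simps)

definition Ev :: "nat \<Rightarrow> (nat \<Rightarrow> real) \<Rightarrow> bool" where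
  "Ev n x \<longleftrightarrow> (n = 0 \<or> Sx x (n - 1) < 1) \<and> 1 \<le> Sx x n"

lemma L3:
  assumes l: "0 < l" and g[measurable]: "g \<in> borel_measurable borel"
  shows "(\<integral>\<^sup>+x. (if Ev n x then g (Px x n) else 0) \<partial>PiM {..n} (\<lambda>_. ex l))
       = ennreal (exp (-l) * l^n / fact n) * (\<integral>\<^sup>+p. g p \<partial>nu n)"
proof (cases n)
  case 0
  have at0: "{..0::nat} = {0}" by auto
  interpret E: product_prob_space "\<lambda>_. ex l" by (rule product_prob_space_ex[OF l])
  have "(\<integral>\<^sup>+x. (if Ev n x then g (Px x n) else 0) \<partial>PiM {..n} (\<lambda>_. ex l))
      = (\<integral>\<^sup>+x. (\<lambda>y. indicator {1..} y * g 1) (x 0) \<partial>PiM {0::nat} (\<lambda>_. ex l))"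
    unfolding 0 at0 by (intro nn_integral_cong) (auto simp: Ev_def Sx_def Px_def indicator_def)
  also have "\<dots> = (\<integral>\<^sup>+y. indicator {1..} y * g 1 \<partial>ex l)"
    by (rule E.product_nn_integral_singleton) measurable
  also have "\<dots> = (\<integral>\<^sup>+y. indicator {1..} y \<partial>ex l) * g 1"
    by (rule nn_integral_multc) measurable
  also have "\<dots> = ennreal (exp (-l)) * g 1"
    using ex_tail[OF l, of 1] by simp
  also have "g 1 = (\<integral>\<^sup>+p. g p \<partial>nu 0)"
    by (rule nn_integral_nu_0[symmetric]) fact
  finally show ?thesis using 0 by simp
next
  case (Suc m)
  interpret E: product_prob_space "\<lambda>_. ex l" by (rule product_prob_space_ex[OF l])
  define \<phi> where "\<phi> s p = (if s < 1 then ennreal (exp (-l*(1-s))) * g p else 0)" for s p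
  have [measurable]: "case_prod \<phi> \<in> borel_measurable (borel \<Otimes>\<^sub>M borel)"
    unfolding \<phi>_def by measurable
  define G where "G w = (\<integral>\<^sup>+p. g (w*p) \<partial>nu m)" for w
  have [measurable]: "G \<in> borel_measurable borel" unfolding G_def by measurable
  have ins: "{..Suc m} = insert (Suc m) {..m}" by auto
  have mS0[measurable]: "(\<lambda>x. Sx x m) \<in> borel_measurable (PiM (insert (Suc m) {..m}) (\<lambda>_. ex l))"
    by (rule measurable_Sx) auto
  have mS1[measurable]: "(\<lambda>x. Sx x (Suc m)) \<in> borel_measurable (PiM (insert (Suc m) {..m}) (\<lambda>_. ex l))"
    by (rule measurable_Sx) auto
  have Ev_eq: "Ev (Suc m) = (\<lambda>x. Sx x m < 1 \<and> 1 \<le> Sx x (Suc m))"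
    by (auto simp: Ev_def fun_eq_iff)
  have mEv[measurable]: "Measurable.pred (PiM (insert (Suc m) {..m}) (\<lambda>_. ex l)) (Ev (Suc m))"
    unfolding Ev_eq by measurable
  have mP1[measurable]: "(\<lambda>x. Px x (Suc m)) \<in> borel_measurable (PiM (insert (Suc m) {..m}) (\<lambda>_. ex l))"
    by (rule measurable_Px) auto
  have "(\<integral>\<^sup>+x. (if Ev n x then g (Px x n) else 0) \<partial>PiM {..n} (\<lambda>_. ex l))
    = (\<integral>\<^sup>+x. (\<integral>\<^sup>+y. (if Ev (Suc m) (x(Suc m:=y)) then g (Px (x(Suc m:=y)) (Suc m)) else 0) \<partial>ex l) \<partial>PiM {..m} (\<lambda>_. ex l))"
    unfolding Suc ins by (rule E.product_nn_integral_insert) auto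
  also have "\<dots> = (\<integral>\<^sup>+x. \<phi> (Sx x m) (Px x (Suc m)) \<partial>PiM {..m} (\<lambda>_. ex l))"
  proof (intro nn_integral_cong)
    fix x :: "nat \<Rightarrow> real"
    have e1: "Sx (x(Suc m:=y)) (Suc m) = Sx x m + y" for y
      by (simp add: Sx_Suc Sx_upd)
    have e0: "Sx (x(Suc m:=y)) m = Sx x m" for y
      by (simp add: Sx_upd)
    have e2: "Px (x(Suc m:=y)) (Suc m) = Px x (Suc m)" for y
      by (simp add: Px_upd)
    show "(\<integral>\<^sup>+y. (if Ev (Suc m) (x(Suc m:=y)) then g (Px (x(Suc m:=y)) (Suc m)) else 0) \<partial>ex l) = \<phi> (Sx x m) (Px x (Suc m))"
    proof (cases "Sx x m < 1")
      case True
      have "(\<integral>\<^sup>+y. (if Ev (Suc m) (x(Suc m:=y)) then g (Px (x(Suc m:=y)) (Suc m)) else 0) \<partial>ex l)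
          = (\<integral>\<^sup>+y. indicator {1 - Sx x m..} y * g (Px x (Suc m)) \<partial>ex l)"
        using True by (intro nn_integral_cong) (auto simp: Ev_def e0 e1 e2 indicator_def)
      also have "\<dots> = (\<integral>\<^sup>+y. indicator {1 - Sx x m..} y \<partial>ex l) * g (Px x (Suc m))"
        by (rule nn_integral_multc) measurable
      also have "\<dots> = \<phi> (Sx x m) (Px x (Suc m))"
        using True ex_tail[OF l, of "1 - Sx x m"] by (simp add: \<phi>_def del: nn_integral_indicator)
      finally show ?thesis .
    next
      case False
      then show ?thesis
        by (simp add: \<phi>_def Ev_def e0 indicator_def)
    qed
  qed
  also have "\<dots> = (\<integral>\<^sup>+t. indicator {0..} t * ennreal (cn l m t) * (\<integral>\<^sup>+p. \<phi> t (t^Suc m * p) \<partial>nu m) \<partial>lborel)"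
    by (rule L2[OF l]) measurable
  also have "\<dots> = (\<integral>\<^sup>+t. ennreal (exp (-l) * l^Suc m / fact (Suc m)) *
       (indicator {0..1} t * ennreal (real (Suc m) * t^m / 1^Suc m) * G ((t/1)^Suc m)) \<partial>lborel)"
  proof (rule nn_integral_cong_AE)
    have "AE t in lborel. t \<noteq> 1" by (rule AE_lborel_singleton)
    then show "AE t in lborel. indicator {0..} t * ennreal (cn l m t) * (\<integral>\<^sup>+p. \<phi> t (t^Suc m * p) \<partial>nu m)
      = ennreal (exp (-l) * l^Suc m / fact (Suc m)) *
       (indicator {0..1} t * ennreal (real (Suc m) * t^m / 1^Suc m) * G ((t/1)^Suc m))"
    proof eventually_elim
      fix t :: real assume "t \<noteq> 1"
      show "indicator {0..} t * ennreal (cn l m t) * (\<integral>\<^sup>+p. \<phi> t (t^Suc m * p) \<partial>nu m)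
      = ennreal (exp (-l) * l^Suc m / fact (Suc m)) *
       (indicator {0..1} t * ennreal (real (Suc m) * t^m / 1^Suc m) * G ((t/1)^Suc m))"
      proof (cases "0 \<le> t \<and> t < 1")
        case True
        have "(\<integral>\<^sup>+p. \<phi> t (t^Suc m * p) \<partial>nu m) = (\<integral>\<^sup>+p. ennreal (exp (-l*(1-t))) * g (t^Suc m * p) \<partial>nu m)"
          using True by (simp add: \<phi>_def)
        also have "\<dots> = ennreal (exp (-l*(1-t))) * G (t^Suc m)"
          unfolding G_def by (rule nn_integral_cmult) measurable
        finally have 1: "(\<integral>\<^sup>+p. \<phi> t (t^Suc m * p) \<partial>nu m) = ennreal (exp (-l*(1-t))) * G (t^Suc m)" .
        have e: "exp (-l*t) * exp (-l*(1-t)) = exp (-l)"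
          by (simp add: exp_add[symmetric] algebra_simps)
        have "cn l m t * exp (-l*(1-t)) = exp (-l) * l^Suc m / fact (Suc m) * (real (Suc m) * t^m)"
        proof -
          have "cn l m t * exp (-l*(1-t)) = l^Suc m * t^m / fact m * (exp (-l*t) * exp (-l*(1-t)))"
            unfolding cn_def by (simp add: field_simps)
          also have "\<dots> = l^Suc m * t^m / fact m * exp (-l)" by (simp only: e)
          also have "\<dots> = exp (-l) * l^Suc m / fact (Suc m) * (real (Suc m) * t^m)"
            unfolding fact_Suc by (rule aux_alg2) auto
          finally show ?thesis .
        qed
        moreover have "0 \<le> cn l m t" "0 \<le> exp (-l) * l^Suc m / fact (Suc m)" "0 \<le> real (Suc m) * t^m"
          using True l unfolding cn_def by auto
        ultimately have cc: "ennreal (cn l m t) * ennreal (exp (-l*(1-t))) = ennreal (exp (-l) * l^Suc m / fact (Suc m)) * ennreal (real (Suc m) * t^m)"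
          by (simp add: ennreal_mult''[symmetric])
        have "indicator {0..} t * ennreal (cn l m t) * (\<integral>\<^sup>+p. \<phi> t (t^Suc m * p) \<partial>nu m)
            = (ennreal (cn l m t) * ennreal (exp (-l*(1-t)))) * G (t^Suc m)"
          using True by (simp only: 1 indicator_simps mult_1 mult.assoc) simp
        also have "\<dots> = ennreal (exp (-l) * l^Suc m / fact (Suc m)) * (ennreal (real (Suc m) * t^m) * G (t^Suc m))"
          by (simp only: cc mult.assoc)
        also have "\<dots> = ennreal (exp (-l) * l^Suc m / fact (Suc m)) *
             (indicator {0..1} t * ennreal (real (Suc m) * t^m / 1^Suc m) * G ((t/1)^Suc m))"
          using True by simp
        finally show ?thesis .
      next
        case False
        with \<open>t \<noteq> 1\<close> consider "t < 0" | "1 < t" by fastforce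
        then show ?thesis
        proof cases
          case 1 then show ?thesis by (simp add: indicator_def)
        next
          case 2 then show ?thesis by (simp add: indicator_def \<phi>_def)
        qed
      qed
    qed
  qed
  also have "\<dots> = ennreal (exp (-l) * l^Suc m / fact (Suc m)) *
       (\<integral>\<^sup>+t. indicator {0..1} t * ennreal (real (Suc m) * t^m / 1^Suc m) * G ((t/1)^Suc m) \<partial>lborel)"
    by (rule nn_integral_cmult) measurable
  also have "(\<integral>\<^sup>+t. indicator {0..1} t * ennreal (real (Suc m) * t^m / 1^Suc m) * G ((t/1)^Suc m) \<partial>lborel)
      = (\<integral>\<^sup>+w. indicator {0..1} w * G w \<partial>lborel)"
    by (rule subst_pow) auto
  also have "\<dots> = (\<integral>\<^sup>+p. g p \<partial>nu (Suc m))"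
    unfolding G_def by (rule nn_integral_nu_Suc[symmetric]) fact
  finally show ?thesis using Suc by simp
qed



definition FP :: "nat \<Rightarrow> (nat \<Rightarrow> real) \<Rightarrow> bool" where
  "FP n f \<longleftrightarrow> (\<forall>i<n. Sx f i < 1) \<and> 1 \<le> Sx f n"

lemma Sx_mono: "(\<forall>k. 0 \<le> f k) \<Longrightarrow> i \<le> j \<Longrightarrow> Sx f i \<le> Sx f j"
  unfolding Sx_def by (rule sum_mono2) auto

lemma FP_Ev: assumes "\<forall>k. 0 \<le> f k" shows "FP n f = Ev n f"
proof (cases n)
  case 0 then show ?thesis by (simp add: FP_def Ev_def)
next
  case (Suc m)
  have "(\<forall>i<Suc m. Sx f i < 1) \<longleftrightarrow> Sx f m < 1"
    using Sx_mono[OF assms] by (meson le_less_trans less_Suc_eq_le lessI)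
  then show ?thesis using Suc by (simp add: FP_def Ev_def)
qed

lemma FP_unique: "FP n f \<Longrightarrow> FP m f \<Longrightarrow> n = m"
  unfolding FP_def by (metis linorder_neqE_nat not_less)

lemma FP_lim:
  assumes nn: "\<forall>k. 0 \<le> f k" and fp: "FP n f"
  shows "prod_min_partial_sums f = Px f n"
proof -
  have "(\<lambda>N. \<Prod>i<N. min (\<Sum>k\<le>i. f k) 1) \<longlonglongrightarrow> Px f n"
  proof (rule tendsto_eventually)
    show "\<forall>\<^sub>F N in sequentially. (\<Prod>i<N. min (\<Sum>k\<le>i. f k) 1) = Px f n"
      unfolding eventually_sequentially
    proof (intro exI allI impI)
      fix N assume "n \<le> N"
      have "(\<Prod>i<N. min (\<Sum>k\<le>i. f k) 1) = (\<Prod>i<N. if i < n then Sx f i else 1)"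
      proof (intro prod.cong refl)
        fix i assume "i \<in> {..<N}"
        show "min (\<Sum>k\<le>i. f k) 1 = (if i < n then Sx f i else 1)"
        proof (cases "i < n")
          case True then show ?thesis using fp by (simp add: FP_def Sx_def)
        next
          case False
          then have "Sx f n \<le> Sx f i" using Sx_mono[OF nn] by simp
          then show ?thesis using fp False by (simp add: FP_def Sx_def)
        qed
      qed
      also have "\<dots> = (\<Prod>i<n. Sx f i)"
      proof -
        have s: "{..<N} \<inter> {i. i < n} = {..<n}" using \<open>n \<le> N\<close> by auto
        show ?thesis by (simp add: prod.If_cases s)
      qed
      finally show "(\<Prod>i<N. min (\<Sum>k\<le>i. f k) 1) = Px f n" by (simp add: Px_def)
    qed
  qed
  then show ?thesis unfolding prod_min_partial_sums_def by (rule limI)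
qed

lemma Sx_restrict: "i \<le> n \<Longrightarrow> Sx (restrict f {..n}) i = Sx f i"
  unfolding Sx_def by (intro sum.cong) auto

lemma Px_restrict: "Px (restrict f {..n}) n = Px f n"
  unfolding Px_def by (intro prod.cong) (auto simp: Sx_restrict)

lemma Ev_restrict: "Ev n (restrict f {..n}) = Ev n f"
  unfolding Ev_def by (simp add: Sx_restrict)

lemma exp_series_ennreal:
  assumes l: "0 < l"
  shows "(\<Sum>n. ennreal (exp (-l) * l^n / fact n)) = 1"
proof -
  have "(\<lambda>n. exp (-l) * (l^n /\<^sub>R fact n)) sums (exp (-l) * exp l)"
    by (rule sums_mult[OF exp_converges])
  moreover have "exp (-l) * exp l = 1" by (metis exp_minus_inverse mult.commute)
  moreover have "(\<lambda>n. exp (-l) * (l^n /\<^sub>R fact n)) = (\<lambda>n. exp (-l) * l^n / fact n)"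
    by (simp add: fun_eq_iff divide_inverse mult_ac)
  ultimately have su: "(\<lambda>n. exp (-l) * l^n / fact n) sums 1" by simp
  have "(\<Sum>n. ennreal (exp (-l) * l^n / fact n)) = ennreal (\<Sum>n. exp (-l) * l^n / fact n)"
    using su l by (intro suminf_ennreal2) (auto simp: sums_iff)
  also have "\<dots> = 1" using su by (simp add: sums_iff)
  finally show ?thesis .
qed

lemma LHS_part:
  fixes M :: "'a measure" and E :: "nat \<Rightarrow> 'a \<Rightarrow> real"
  assumes l: "0 < l" and P: "prob_space M"
    and ind: "prob_space.indep_vars M (\<lambda>_. borel) E UNIV"
    and D: "\<And>k. distributed M lborel (E k) (exponential_density l)"
    and g[measurable]: "g \<in> borel_measurable borel"
  shows "(\<integral>\<^sup>+\<omega>. g (prod_min_partial_sums (\<lambda>k. E k \<omega>)) \<partial>M)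
       = (\<Sum>n. ennreal (exp (-l) * l^n / fact n) * (\<integral>\<^sup>+p. g p \<partial>nu n))"
proof -
  interpret prob_space M by (rule P)
  have mE[measurable]: "E k \<in> borel_measurable M" for k
    using distributed_measurable[OF D[of k]] by simp
  have mSx[measurable]: "(\<lambda>\<omega>. Sx (\<lambda>k. E k \<omega>) i) \<in> borel_measurable M" for i
    unfolding Sx_def by measurable
  have mPx[measurable]: "(\<lambda>\<omega>. Px (\<lambda>k. E k \<omega>) i) \<in> borel_measurable M" for i
    unfolding Px_def by measurable
  have mFP[measurable]: "Measurable.pred M (\<lambda>\<omega>. FP n (\<lambda>k. E k \<omega>))" for n
    unfolding FP_def by measurable
  have dE: "distr M borel (E k) = ex l" for k
  proof -
    have "distr M borel (E k) = distr M lborel (E k)" by (rule distr_cong) auto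
    also have "\<dots> = ex l" unfolding ex_def by (rule distributed_distr_eq_density[OF D])
    finally show ?thesis .
  qed
  have LA: "(\<integral>\<^sup>+\<omega>. (if Ev n (\<lambda>k. E k \<omega>) then g (Px (\<lambda>k. E k \<omega>) n) else 0) \<partial>M)
      = ennreal (exp (-l) * l^n / fact n) * (\<integral>\<^sup>+p. g p \<partial>nu n)"
    if g'[measurable]: "g \<in> borel_measurable borel" for g :: "real \<Rightarrow> ennreal" and n
  proof -
    have indn: "indep_vars (\<lambda>_. borel) E {..n}"
      by (rule indep_vars_subset[OF ind]) auto
    have jd: "distr M (PiM {..n} (\<lambda>_. borel)) (\<lambda>\<omega>. \<lambda>i\<in>{..n}. E i \<omega>) = PiM {..n} (\<lambda>i. distr M borel (E i))"
      using indn by (subst (asm) indep_vars_iff_distr_eq_PiM) auto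
    also have "\<dots> = PiM {..n} (\<lambda>_. ex l)"
      by (intro PiM_cong) (auto simp: dE)
    finally have jd: "distr M (PiM {..n} (\<lambda>_. borel)) (\<lambda>\<omega>. \<lambda>i\<in>{..n}. E i \<omega>) = PiM {..n} (\<lambda>_. ex l)" .
    define h where "h x = (if Ev n x then g (Px x n) else 0)" for x
    have [measurable]: "(\<lambda>x. Sx x n) \<in> borel_measurable (PiM {..n} (\<lambda>_. borel))"
      by (rule measurable_Sx) auto
    have [measurable]: "(\<lambda>x. Sx x (n - 1)) \<in> borel_measurable (PiM {..n} (\<lambda>_. borel))"
      by (rule measurable_Sx) auto
    have [measurable]: "(\<lambda>x. Px x n) \<in> borel_measurable (PiM {..n} (\<lambda>_. borel))"
      by (rule measurable_Px) auto
    have mh[measurable]: "h \<in> borel_measurable (PiM {..n} (\<lambda>_. borel))"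
      unfolding h_def Ev_def by measurable
    have mv[measurable]: "(\<lambda>\<omega>. \<lambda>i\<in>{..n}. E i \<omega>) \<in> measurable M (PiM {..n} (\<lambda>_. borel))"
      by measurable
    have "(\<integral>\<^sup>+\<omega>. (if Ev n (\<lambda>k. E k \<omega>) then g (Px (\<lambda>k. E k \<omega>) n) else 0) \<partial>M)
        = (\<integral>\<^sup>+\<omega>. h (\<lambda>i\<in>{..n}. E i \<omega>) \<partial>M)"
      unfolding h_def by (intro nn_integral_cong) (simp add: Ev_restrict Px_restrict)
    also have "\<dots> = (\<integral>\<^sup>+x. h x \<partial>distr M (PiM {..n} (\<lambda>_. borel)) (\<lambda>\<omega>. \<lambda>i\<in>{..n}. E i \<omega>))"
      by (rule nn_integral_distr[symmetric]) measurable
    also have "\<dots> = (\<integral>\<^sup>+x. h x \<partial>PiM {..n} (\<lambda>_. ex l))"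
      by (simp only: jd)
    also have "\<dots> = ennreal (exp (-l) * l^n / fact n) * (\<integral>\<^sup>+p. g p \<partial>nu n)"
      unfolding h_def by (rule L3[OF l g'])
    finally show ?thesis .
  qed
  have AE0: "AE \<omega> in M. \<forall>k. 0 \<le> E k \<omega>"
  proof (subst AE_all_countable, intro allI)
    fix k
    have ae: "AE x in density lborel (\<lambda>x. ennreal (exponential_density l x)). 0 \<le> x"
      by (subst AE_density) (auto simp: exponential_density_def not_less)
    have eq: "distr M lborel (E k) = density lborel (\<lambda>x. ennreal (exponential_density l x))"
      using distributed_distr_eq_density[OF D[of k]] by simp
    have "AE x in distr M lborel (E k). 0 \<le> x"
      by (subst eq) (rule ae)
    then show "AE \<omega> in M. 0 \<le> E k \<omega>"
      by (rule AE_distrD[rotated]) simp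
  qed
  have LB: "(\<integral>\<^sup>+\<omega>. (if FP n (\<lambda>k. E k \<omega>) then g (Px (\<lambda>k. E k \<omega>) n) else 0) \<partial>M)
      = ennreal (exp (-l) * l^n / fact n) * (\<integral>\<^sup>+p. g p \<partial>nu n)"
    if g'[measurable]: "g \<in> borel_measurable borel" for g :: "real \<Rightarrow> ennreal" and n
  proof -
    have "(\<integral>\<^sup>+\<omega>. (if FP n (\<lambda>k. E k \<omega>) then g (Px (\<lambda>k. E k \<omega>) n) else 0) \<partial>M)
        = (\<integral>\<^sup>+\<omega>. (if Ev n (\<lambda>k. E k \<omega>) then g (Px (\<lambda>k. E k \<omega>) n) else 0) \<partial>M)"
      using AE0 by (intro nn_integral_cong_AE) (auto elim!: eventually_mono simp: FP_Ev)
    also have "\<dots> = ennreal (exp (-l) * l^n / fact n) * (\<integral>\<^sup>+p. g p \<partial>nu n)"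
      by (rule LA) fact
    finally show ?thesis .
  qed
  define A where "A n = {\<omega>\<in>space M. FP n (\<lambda>k. E k \<omega>)}" for n
  have Asets: "A n \<in> sets M" for n unfolding A_def by measurable
  have emA: "emeasure M (A n) = ennreal (exp (-l) * l^n / fact n)" for n
  proof -
    have "emeasure M (A n) = (\<integral>\<^sup>+\<omega>. indicator (A n) \<omega> \<partial>M)"
      using Asets by simp
    also have "\<dots> = (\<integral>\<^sup>+\<omega>. (if FP n (\<lambda>k. E k \<omega>) then (\<lambda>_. 1::ennreal) (Px (\<lambda>k. E k \<omega>) n) else 0) \<partial>M)"
      by (intro nn_integral_cong) (auto simp: A_def indicator_def)
    also have "\<dots> = ennreal (exp (-l) * l^n / fact n) * (\<integral>\<^sup>+p. 1 \<partial>nu n)"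
      by (rule LB) measurable
    also have "(\<integral>\<^sup>+p. 1 \<partial>nu n) = 1"
    proof -
      interpret B: prob_space "nu n" by (rule prob_space_nu)
      show ?thesis using B.emeasure_space_1 by simp
    qed
    finally show ?thesis by simp
  qed
  have disj: "disjoint_family A"
    unfolding disjoint_family_on_def A_def using FP_unique by blast
  have "emeasure M (\<Union>n. A n) = 1"
    using suminf_emeasure[of A M, OF _ disj] Asets emA exp_series_ennreal[OF l] by auto
  then have "prob (\<Union>n. A n) = 1"
    by (simp add: emeasure_eq_measure)
  then have AE1: "AE \<omega> in M. \<omega> \<in> (\<Union>n. A n)"
    by (rule AE_prob_1)
  have AEsum: "AE \<omega> in M. g (prod_min_partial_sums (\<lambda>k. E k \<omega>))
      = (\<Sum>n. (if FP n (\<lambda>k. E k \<omega>) then g (Px (\<lambda>k. E k \<omega>) n) else 0))"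
    using AE0 AE1
  proof eventually_elim
    fix \<omega> assume nn: "\<forall>k. 0 \<le> E k \<omega>" and "\<omega> \<in> (\<Union>n. A n)"
    then obtain n0 where fp: "FP n0 (\<lambda>k. E k \<omega>)" by (auto simp: A_def)
    have "(\<lambda>n. (if FP n (\<lambda>k. E k \<omega>) then g (Px (\<lambda>k. E k \<omega>) n) else 0))
        = (\<lambda>n. if n = n0 then g (Px (\<lambda>k. E k \<omega>) n) else 0)"
      using fp FP_unique by (auto simp: fun_eq_iff)
    then have "(\<Sum>n. (if FP n (\<lambda>k. E k \<omega>) then g (Px (\<lambda>k. E k \<omega>) n) else 0)) = g (Px (\<lambda>k. E k \<omega>) n0)"
      using sums_single[of n0 "\<lambda>n. g (Px (\<lambda>k. E k \<omega>) n)"] by (simp add: sums_iff)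
    also have "\<dots> = g (prod_min_partial_sums (\<lambda>k. E k \<omega>))"
      using FP_lim[OF _ fp] nn by simp
    finally show "g (prod_min_partial_sums (\<lambda>k. E k \<omega>))
      = (\<Sum>n. (if FP n (\<lambda>k. E k \<omega>) then g (Px (\<lambda>k. E k \<omega>) n) else 0))" by simp
  qed
  have "(\<integral>\<^sup>+\<omega>. g (prod_min_partial_sums (\<lambda>k. E k \<omega>)) \<partial>M)
      = (\<integral>\<^sup>+\<omega>. (\<Sum>n. (if FP n (\<lambda>k. E k \<omega>) then g (Px (\<lambda>k. E k \<omega>) n) else 0)) \<partial>M)"
    by (rule nn_integral_cong_AE[OF AEsum])
  also have "\<dots> = (\<Sum>n. (\<integral>\<^sup>+\<omega>. (if FP n (\<lambda>k. E k \<omega>) then g (Px (\<lambda>k. E k \<omega>) n) else 0) \<partial>M))"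
    by (rule nn_integral_suminf) measurable
  also have "\<dots> = (\<Sum>n. ennreal (exp (-l) * l^n / fact n) * (\<integral>\<^sup>+p. g p \<partial>nu n))"
    by (intro suminf_cong LB) fact
  finally show ?thesis .
qed



lemma RHS_part:
  fixes M' :: "'b measure" and N :: "'b \<Rightarrow> nat" and U :: "nat \<Rightarrow> 'b \<Rightarrow> real"
  assumes l: "0 < l" and P: "prob_space M'"
    and mN[measurable]: "N \<in> measurable M' (count_space UNIV)"
    and dN: "distr M' (count_space UNIV) N = measure_pmf (poisson_pmf l)"
    and mU[measurable]: "\<And>i. U i \<in> borel_measurable M'"
    and dU: "\<And>i. distr M' borel (U i) = uniform_measure lborel {0<..<1}"
    and ind: "prob_space.indep_vars M' (\<lambda>_. borel) (\<lambda>j \<omega>. case j of None \<Rightarrow> real (N \<omega>) | Some i \<Rightarrow> U i \<omega>) UNIV"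
    and g[measurable]: "g \<in> borel_measurable borel"
  shows "(\<integral>\<^sup>+\<omega>. g (\<Prod>i<N \<omega>. U i \<omega>) \<partial>M') = (\<Sum>n. ennreal (exp (-l) * l^n / fact n) * (\<integral>\<^sup>+p. g p \<partial>nu n))"
proof -
  interpret prob_space M' by (rule P)
  define Y where "Y = (\<lambda>j \<omega>. case j of None \<Rightarrow> real (N \<omega>) | Some i \<Rightarrow> U i \<omega>)"
  have mY[measurable]: "Y j \<in> borel_measurable M'" for j
    by (cases j) (auto simp: Y_def)
  have indY: "indep_vars (\<lambda>_. borel) Y UNIV" using ind unfolding Y_def .
  have RA: "(\<integral>\<^sup>+\<omega>. (if N \<omega> = n then g (\<Prod>i<n. U i \<omega>) else 0) \<partial>M')
      = ennreal (exp (-l) * l^n / fact n) * (\<integral>\<^sup>+p. g p \<partial>nu n)" for n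
  proof -
    define J where "J = Some ` {..<n}"
    define I where "I = insert None J"
    have fJ: "finite J" and nJ: "None \<notin> J" and cJ: "card J = n"
      unfolding J_def by (auto simp: card_image)
    define Mj where "Mj j = distr M' borel (Y j)" for j
    interpret PP: product_prob_space Mj
      unfolding product_prob_space_def product_prob_space_axioms_def product_sigma_finite_def Mj_def
      by (auto intro!: prob_space_imp_sigma_finite prob_space_distr)
    have sMj[measurable_cong, simp]: "sets (Mj j) = sets borel" for j by (simp add: Mj_def)
    have indn: "indep_vars (\<lambda>_. borel) Y I"
      by (rule indep_vars_subset[OF indY]) auto
    have jd: "distr M' (PiM I (\<lambda>_. borel)) (\<lambda>\<omega>. \<lambda>j\<in>I. Y j \<omega>) = PiM I Mj"
      using indn unfolding Mj_def by (subst (asm) indep_vars_iff_distr_eq_PiM) (auto simp: I_def)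
    define h where "h y = indicator {real n} (y None) * g (\<Prod>j\<in>J. y j)" for y :: "nat option \<Rightarrow> real"
    have mh: "h \<in> borel_measurable (PiM I (\<lambda>_. borel))"
    proof -
      have [measurable]: "(\<lambda>y::nat option \<Rightarrow> real. y j) \<in> borel_measurable (PiM I (\<lambda>_. borel))" if "j \<in> I" for j
        using measurable_component_singleton[OF that, of "\<lambda>_. borel"] .
      have c: "(\<lambda>y::nat option \<Rightarrow> real. y j) \<in> borel_measurable (PiM I (\<lambda>_. borel))" if "j \<in> J" for j
        using measurable_component_singleton[of j I "\<lambda>_. borel"] that by (auto simp: I_def)
      have [measurable]: "(\<lambda>y::nat option \<Rightarrow> real. \<Prod>j\<in>J. y j) \<in> borel_measurable (PiM I (\<lambda>_. borel))"
        using borel_measurable_prod[of J "\<lambda>j y. y j" "PiM I (\<lambda>_. borel)", OF c] by simp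
      have [measurable]: "(\<lambda>y::nat option \<Rightarrow> real. y None) \<in> borel_measurable (PiM I (\<lambda>_. borel))"
        using measurable_component_singleton[of None I "\<lambda>_. borel"] by (simp add: I_def)
      show ?thesis unfolding h_def by measurable
    qed
    have mh': "h \<in> borel_measurable (PiM (insert None J) Mj)"
    proof -
      have eq: "sets (PiM (insert None J) Mj) = sets (PiM I (\<lambda>_. borel))"
        by (rule sets_PiM_cong) (auto simp: I_def)
      show ?thesis using mh measurable_cong_sets[OF eq refl] by blast
    qed
    have mv: "(\<lambda>\<omega>. \<lambda>j\<in>I. Y j \<omega>) \<in> measurable M' (PiM I (\<lambda>_. borel))"
      by measurable
    have "(\<integral>\<^sup>+\<omega>. (if N \<omega> = n then g (\<Prod>i<n. U i \<omega>) else 0) \<partial>M') = (\<integral>\<^sup>+\<omega>. h (\<lambda>j\<in>I. Y j \<omega>) \<partial>M')"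
    proof (intro nn_integral_cong)
      fix \<omega>
      have "(\<Prod>j\<in>J. (\<lambda>j\<in>I. Y j \<omega>) j) = (\<Prod>j\<in>J. Y j \<omega>)"
        by (intro prod.cong) (auto simp: I_def)
      also have "\<dots> = (\<Prod>i<n. U i \<omega>)"
        unfolding J_def by (subst prod.reindex) (auto simp: Y_def)
      finally show "(if N \<omega> = n then g (\<Prod>i<n. U i \<omega>) else 0) = h (\<lambda>j\<in>I. Y j \<omega>)"
        unfolding h_def by (simp add: I_def Y_def indicator_def)
    qed
    also have "\<dots> = (\<integral>\<^sup>+y. h y \<partial>distr M' (PiM I (\<lambda>_. borel)) (\<lambda>\<omega>. \<lambda>j\<in>I. Y j \<omega>))"
      by (rule nn_integral_distr[symmetric, OF mv]) (simp add: mh)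
    also have "\<dots> = (\<integral>\<^sup>+y. h y \<partial>PiM (insert None J) Mj)"
      by (subst jd) (simp add: I_def)
    also have "\<dots> = (\<integral>\<^sup>+y. (\<integral>\<^sup>+x. h (x(None := y)) \<partial>PiM J Mj) \<partial>Mj None)"
      by (rule PP.product_nn_integral_insert_rev[OF fJ nJ mh'])
    also have "\<dots> = (\<integral>\<^sup>+y. indicator {real n} y * (\<integral>\<^sup>+x. g (\<Prod>j\<in>J. x j) \<partial>PiM J Mj) \<partial>Mj None)"
    proof (intro nn_integral_cong)
      fix y
      have "(\<integral>\<^sup>+x. h (x(None := y)) \<partial>PiM J Mj) = (\<integral>\<^sup>+x. indicator {real n} y * g (\<Prod>j\<in>J. x j) \<partial>PiM J Mj)"
      proof (intro nn_integral_cong)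
        fix x :: "nat option \<Rightarrow> real"
        have "(\<Prod>j\<in>J. (x(None := y)) j) = (\<Prod>j\<in>J. x j)"
          using nJ by (intro prod.cong) auto
        then show "h (x(None := y)) = indicator {real n} y * g (\<Prod>j\<in>J. x j)"
          unfolding h_def by simp
      qed
      also have "\<dots> = indicator {real n} y * (\<integral>\<^sup>+x. g (\<Prod>j\<in>J. x j) \<partial>PiM J Mj)"
      proof (rule nn_integral_cmult)
        have c: "(\<lambda>y. y j) \<in> borel_measurable (PiM J Mj)" if "j \<in> J" for j
          using measurable_component_singleton[of j J Mj] that measurable_cong_sets[OF refl sMj[of j], of "PiM J Mj"] by blast
        have [measurable]: "(\<lambda>x. \<Prod>j\<in>J. x j) \<in> borel_measurable (PiM J Mj)"
          using borel_measurable_prod[of J "\<lambda>j y. y j" "PiM J Mj", OF c] by simp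
        then show "(\<lambda>x. g (\<Prod>j\<in>J. x j)) \<in> borel_measurable (PiM J Mj)" by measurable
      qed
      finally show "(\<integral>\<^sup>+x. h (x(None := y)) \<partial>PiM J Mj) = indicator {real n} y * (\<integral>\<^sup>+x. g (\<Prod>j\<in>J. x j) \<partial>PiM J Mj)" .
    qed
    also have "(\<integral>\<^sup>+x. g (\<Prod>j\<in>J. x j) \<partial>PiM J Mj) = (\<integral>\<^sup>+p. g p \<partial>nu n)"
    proof -
      have "PiM J Mj = PiM J (\<lambda>_. unif)"
        by (intro PiM_cong) (auto simp: J_def Mj_def Y_def dU unif_def)
      then show ?thesis using prod_unif[OF fJ g] cJ by simp
    qed
    also have "(\<integral>\<^sup>+y. indicator {real n} y * (\<integral>\<^sup>+p. g p \<partial>nu n) \<partial>Mj None)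
        = emeasure (Mj None) {real n} * (\<integral>\<^sup>+p. g p \<partial>nu n)"
      by (subst nn_integral_multc) auto
    also have "emeasure (Mj None) {real n} = ennreal (exp (-l) * l^n / fact n)"
    proof -
      have "emeasure (Mj None) {real n} = emeasure M' ((\<lambda>\<omega>. real (N \<omega>)) -` {real n} \<inter> space M')"
        unfolding Mj_def Y_def by (subst emeasure_distr) auto
      also have "\<dots> = emeasure M' (N -` {n} \<inter> space M')"
        by (intro arg_cong[where f="emeasure M'"]) auto
      also have "\<dots> = emeasure (distr M' (count_space UNIV) N) {n}"
        by (subst emeasure_distr) auto
      also have "\<dots> = ennreal (pmf (poisson_pmf l) n)"
        unfolding dN by (simp add: emeasure_pmf_single)
      also have "pmf (poisson_pmf l) n = exp (-l) * l^n / fact n"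
        using l by (simp add: pmf_poisson)
      finally show ?thesis .
    qed
    finally show ?thesis .
  qed
  have "(\<integral>\<^sup>+\<omega>. g (\<Prod>i<N \<omega>. U i \<omega>) \<partial>M') = (\<integral>\<^sup>+\<omega>. (\<Sum>n. (if N \<omega> = n then g (\<Prod>i<n. U i \<omega>) else 0)) \<partial>M')"
  proof (intro nn_integral_cong)
    fix \<omega>
    show "g (\<Prod>i<N \<omega>. U i \<omega>) = (\<Sum>n. (if N \<omega> = n then g (\<Prod>i<n. U i \<omega>) else 0))"
      using sums_single[of "N \<omega>" "\<lambda>n. g (\<Prod>i<n. U i \<omega>)"] by (simp add: sums_iff eq_commute)
  qed
  also have "\<dots> = (\<Sum>n. (\<integral>\<^sup>+\<omega>. (if N \<omega> = n then g (\<Prod>i<n. U i \<omega>) else 0) \<partial>M'))"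
    by (rule nn_integral_suminf) measurable
  also have "\<dots> = (\<Sum>n. ennreal (exp (-l) * l^n / fact n) * (\<integral>\<^sup>+p. g p \<partial>nu n))"
    by (intro suminf_cong RA)
  finally show ?thesis .
qed


theorem lemma1:
  fixes M :: "'a measure" and M' :: "'b measure"
    and l :: real
    and E :: "nat \<Rightarrow> 'a \<Rightarrow> real"
    and N :: "'b \<Rightarrow> nat" and U :: "nat \<Rightarrow> 'b \<Rightarrow> real"
  assumes "0 < l"
    and "prob_space M"
    and "prob_space.indep_vars M (\<lambda>_. borel) E UNIV"
    and "\<And>k. distributed M lborel (E k) (exponential_density l)"
    and "prob_space M'"
    and "N \<in> measurable M' (count_space UNIV)"
    and "distr M' (count_space UNIV) N = measure_pmf (poisson_pmf l)"
    and "\<And>i. U i \<in> borel_measurable M'"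
    and "\<And>i. distr M' borel (U i) = uniform_measure lborel {0<..<1}"
    and "prob_space.indep_vars M' (\<lambda>_. borel)
           (\<lambda>j \<omega>. case j of None \<Rightarrow> real (N \<omega>) | Some i \<Rightarrow> U i \<omega>) UNIV"
  shows "distr M borel (\<lambda>\<omega>. prod_min_partial_sums (\<lambda>k. E k \<omega>))
       = distr M' borel (\<lambda>\<omega>. \<Prod>i<N \<omega>. U i \<omega>)"
proof -
  note a = assms
  have mE[measurable]: "E k \<in> borel_measurable M" for k
    using distributed_measurable[OF a(4)[of k]] by simp
  note [measurable] = a(6) a(8)
  have mX[measurable]: "(\<lambda>\<omega>. prod_min_partial_sums (\<lambda>k. E k \<omega>)) \<in> borel_measurable M"
    unfolding prod_min_partial_sums_def by measurable
  have mY[measurable]: "(\<lambda>\<omega>. \<Prod>i<N \<omega>. U i \<omega>) \<in> borel_measurable M'"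
    apply (rule measurable_compose_countable[where f="\<lambda>n \<omega>. \<Prod>i<n. U i \<omega>" and g=N])
    subgoal by measurable
    subgoal by (rule a(6))
    done
  show ?thesis
  proof (rule measure_eqI)
    show "sets (distr M borel (\<lambda>\<omega>. prod_min_partial_sums (\<lambda>k. E k \<omega>))) = sets (distr M' borel (\<lambda>\<omega>. \<Prod>i<N \<omega>. U i \<omega>))"
      by simp
    fix A assume "A \<in> sets (distr M borel (\<lambda>\<omega>. prod_min_partial_sums (\<lambda>k. E k \<omega>)))"
    then have A[measurable]: "A \<in> sets borel" by simp
    have "emeasure (distr M borel (\<lambda>\<omega>. prod_min_partial_sums (\<lambda>k. E k \<omega>))) A
        = (\<integral>\<^sup>+x. indicator A x \<partial>distr M borel (\<lambda>\<omega>. prod_min_partial_sums (\<lambda>k. E k \<omega>)))"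
      by (rule nn_integral_indicator[symmetric]) simp
    also have "\<dots> = (\<integral>\<^sup>+\<omega>. indicator A (prod_min_partial_sums (\<lambda>k. E k \<omega>)) \<partial>M)"
      by (rule nn_integral_distr) measurable
    also have "\<dots> = (\<Sum>n. ennreal (exp (-l) * l^n / fact n) * (\<integral>\<^sup>+p. indicator A p \<partial>nu n))"
      by (rule LHS_part[OF a(1-4)]) measurable
    also have "\<dots> = (\<integral>\<^sup>+\<omega>. indicator A (\<Prod>i<N \<omega>. U i \<omega>) \<partial>M')"
      by (rule RHS_part[OF a(1,5-10), symmetric]) measurable
    also have "\<dots> = (\<integral>\<^sup>+x. indicator A x \<partial>distr M' borel (\<lambda>\<omega>. \<Prod>i<N \<omega>. U i \<omega>))"
      by (rule nn_integral_distr[symmetric]) measurable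
    also have "\<dots> = emeasure (distr M' borel (\<lambda>\<omega>. \<Prod>i<N \<omega>. U i \<omega>)) A"
      by (rule nn_integral_indicator) simp
    finally show "emeasure (distr M borel (\<lambda>\<omega>. prod_min_partial_sums (\<lambda>k. E k \<omega>))) A
        = emeasure (distr M' borel (\<lambda>\<omega>. \<Prod>i<N \<omega>. U i \<omega>)) A" .
  qed
qed

end
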